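(* Let $\mathfrak{g}$ be a connected soluble ranked Lie ring such that $\mathfrak{g}'$ is nilpotent. Then the Frattini subring $\Phi(\mathfrak{g})$ is an ideal of $\mathfrak{g}$.
   Context: A ranked Lie ring is a Lie ring definable in a structure of finite Morley rank; connected means no proper definable subgroup of finite index. The Frattini subring $\Phi(\mathfrak{g})$ of a connected ranked Lie ring $\mathfrak{g}$ is the intersection of all proper definable connected subrings of $\mathfrak{g}$ that are maximal among proper definable connected subrings. *)

theory Defs
  imports Main
begin

definition lie_ring :: "('a::ab_group_add \<Rightarrow> 'a \<Rightarrow> 'a) \<Rightarrow> bool" where
  "lie_ring br \<longleftrightarrow>
     (\<forall>x y z. br (x + y) z = br x z + br y z) \<and>
     (\<forall>x y z. br x (y + z) = br x y + br x z) \<and>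
     (\<forall>x. br x x = 0) \<and>
     (\<forall>x y z. br x (br y z) + br y (br z x) + br z (br x y) = 0)"

definition add_subgroup :: "'a::ab_group_add set \<Rightarrow> bool" where
  "add_subgroup H \<longleftrightarrow> 0 \<in> H \<and> (\<forall>x\<in>H. \<forall>y\<in>H. x - y \<in> H)"

definition lie_subring :: "('a::ab_group_add \<Rightarrow> 'a \<Rightarrow> 'a) \<Rightarrow> 'a set \<Rightarrow> bool" where
  "lie_subring br H \<longleftrightarrow> add_subgroup H \<and> (\<forall>x\<in>H. \<forall>y\<in>H. br x y \<in> H)"

definition lie_ideal :: "('a::ab_group_add \<Rightarrow> 'a \<Rightarrow> 'a) \<Rightarrow> 'a set \<Rightarrow> bool" where
  "lie_ideal br I \<longleftrightarrow> add_subgroup I \<and> (\<forall>x. \<forall>y\<in>I. br x y \<in> I)"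

definition gen_subgroup :: "'a::ab_group_add set \<Rightarrow> 'a set" where
  "gen_subgroup S = \<Inter>{H. add_subgroup H \<and> S \<subseteq> H}"

definition br_set :: "('a::ab_group_add \<Rightarrow> 'a \<Rightarrow> 'a) \<Rightarrow> 'a set \<Rightarrow> 'a set \<Rightarrow> 'a set" where
  "br_set br A B = gen_subgroup {br a b | a b. a \<in> A \<and> b \<in> B}"

text \<open>Derived series: g^(0) = g, g^(k+1) = [g^(k), g^(k)]; in particular g' = derived br 1.\<close>
fun derived :: "('a::ab_group_add \<Rightarrow> 'a \<Rightarrow> 'a) \<Rightarrow> nat \<Rightarrow> 'a set" where
  "derived br 0 = UNIV"
| "derived br (Suc k) = br_set br (derived br k) (derived br k)"

definition soluble :: "('a::ab_group_add \<Rightarrow> 'a \<Rightarrow> 'a) \<Rightarrow> bool" where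
  "soluble br \<longleftrightarrow> (\<exists>k. derived br k = {0})"

text \<open>Lower central series of a Lie subring h: h_1 = h, h_(k+1) = [h_k, h].\<close>
fun lcs :: "('a::ab_group_add \<Rightarrow> 'a \<Rightarrow> 'a) \<Rightarrow> 'a set \<Rightarrow> nat \<Rightarrow> 'a set" where
  "lcs br h 0 = h"
| "lcs br h (Suc k) = br_set br (lcs br h k) h"

definition nilpotent_subring :: "('a::ab_group_add \<Rightarrow> 'a \<Rightarrow> 'a) \<Rightarrow> 'a set \<Rightarrow> bool" where
  "nilpotent_subring br h \<longleftrightarrow> (\<exists>k. lcs br h k = {0})"

text \<open>A family D of sets of tuples is the
  family of all parameter-definable sets of a first-order structure on the universe
  (take the members of D themselves as basic relations) iff it satisfies the closure
  conditions below.\<close>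

definition tuples :: "nat \<Rightarrow> 'a list set" where
  "tuples n = {xs. length xs = n}"

definition fib :: "nat \<Rightarrow> 'a list set \<Rightarrow> 'a list \<Rightarrow> 'a list set" where
  "fib m A b = {xs. b @ xs \<in> A}"

definition definable_family :: "'a list set set \<Rightarrow> bool" where
  "definable_family D \<longleftrightarrow>
     (\<forall>S\<in>D. \<exists>n. S \<subseteq> tuples n) \<and>
     (\<forall>n. tuples n \<in> D) \<and>
     (\<forall>S\<in>D. \<forall>T\<in>D. S \<inter> T \<in> D) \<and>
     (\<forall>S\<in>D. \<forall>n. S \<subseteq> tuples n \<longrightarrow> tuples n - S \<in> D) \<and>
     (\<forall>n i j. i < n \<longrightarrow> j < n \<longrightarrow> {xs \<in> tuples n. xs ! i = xs ! j} \<in> D) \<and>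
     (\<forall>n i a. i < n \<longrightarrow> {xs \<in> tuples n. xs ! i = a} \<in> D) \<and>
     (\<forall>S\<in>D. \<forall>T\<in>D. {xs @ ys | xs ys. xs \<in> S \<and> ys \<in> T} \<in> D) \<and>
     (\<forall>S\<in>D. \<forall>n p. S \<subseteq> tuples n \<longrightarrow> bij_betw p {..<n} {..<n} \<longrightarrow>
         (\<lambda>xs. map (\<lambda>i. xs ! p i) [0..<n]) ` S \<in> D) \<and>
     (\<forall>S\<in>D. \<forall>n. S \<subseteq> tuples (Suc n) \<longrightarrow> take n ` S \<in> D)"

definition ranked :: "'a list set set \<Rightarrow> ('a list set \<Rightarrow> nat) \<Rightarrow> bool" where
  "ranked D rk \<longleftrightarrow>
     definable_family D \<and>
     \<comment> \<open>monotonicity: rk A \<ge> k+1 iff infinitely many pairwise disjoint definable subsets of rank \<ge> k\<close>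
     (\<forall>A\<in>D. \<forall>k. A \<noteq> {} \<longrightarrow>
        (Suc k \<le> rk A \<longleftrightarrow>
          (\<exists>F. infinite F \<and> F \<subseteq> D \<and> pairwise disjnt F \<and>
               (\<forall>X\<in>F. X \<subseteq> A \<and> X \<noteq> {} \<and> k \<le> rk X)))) \<and>
     \<comment> \<open>definability of rank\<close>
     (\<forall>A\<in>D. \<forall>m n k. A \<subseteq> tuples (m + n) \<longrightarrow>
        {b \<in> tuples m. fib m A b \<noteq> {} \<and> rk (fib m A b) = k} \<in> D) \<and>
     \<comment> \<open>additivity\<close>
     (\<forall>A\<in>D. \<forall>B\<in>D. \<forall>n m k (f :: 'a list \<Rightarrow> 'a list).
        A \<subseteq> tuples n \<longrightarrow> B \<subseteq> tuples m \<longrightarrow> B \<noteq> {} \<longrightarrow> f ` A \<subseteq> B \<longrightarrow>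
        {a @ f a | a. a \<in> A} \<in> D \<longrightarrow>
        (\<forall>b\<in>B. {a\<in>A. f a = b} \<noteq> {} \<and> rk {a\<in>A. f a = b} = k) \<longrightarrow>
        rk A = rk B + k) \<and>
     \<comment> \<open>elimination of infinite quantifiers\<close>
     (\<forall>A\<in>D. \<forall>m n. A \<subseteq> tuples (m + n) \<longrightarrow>
        (\<exists>N. \<forall>b\<in>tuples m. finite (fib m A b) \<longrightarrow> card (fib m A b) \<le> N))"

definition definable :: "'a list set set \<Rightarrow> 'a set \<Rightarrow> bool" where
  "definable D H \<longleftrightarrow> (\<lambda>x. [x]) ` H \<in> D"

definition ranked_lie_ring ::
  "('a::ab_group_add \<Rightarrow> 'a \<Rightarrow> 'a) \<Rightarrow> 'a list set set \<Rightarrow> ('a list set \<Rightarrow> nat) \<Rightarrow> bool" where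
  "ranked_lie_ring br D rk \<longleftrightarrow> lie_ring br \<and> ranked D rk \<and>
     {[x, y, x + y] | x y. True} \<in> D \<and> {[x, y, br x y] | x y. True} \<in> D"

definition connected :: "'a list set set \<Rightarrow> 'a::ab_group_add set \<Rightarrow> bool" where
  "connected D H \<longleftrightarrow>
     (\<forall>K. add_subgroup K \<longrightarrow> K \<subseteq> H \<longrightarrow> definable D K \<longrightarrow>
        finite ((\<lambda>x. (+) x ` K) ` H) \<longrightarrow> K = H)"

definition def_conn_subring ::
  "('a::ab_group_add \<Rightarrow> 'a \<Rightarrow> 'a) \<Rightarrow> 'a list set set \<Rightarrow> 'a set \<Rightarrow> bool" where
  "def_conn_subring br D H \<longleftrightarrow> lie_subring br H \<and> definable D H \<and> connected D H"

definition maximal_def_conn_subring ::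
  "('a::ab_group_add \<Rightarrow> 'a \<Rightarrow> 'a) \<Rightarrow> 'a list set set \<Rightarrow> 'a set \<Rightarrow> bool" where
  "maximal_def_conn_subring br D H \<longleftrightarrow>
     def_conn_subring br D H \<and> H \<noteq> UNIV \<and>
     (\<forall>K. def_conn_subring br D K \<longrightarrow> K \<noteq> UNIV \<longrightarrow> H \<subseteq> K \<longrightarrow> K = H)"

definition frattini :: "('a::ab_group_add \<Rightarrow> 'a \<Rightarrow> 'a) \<Rightarrow> 'a list set set \<Rightarrow> 'a set" where
  "frattini br D = \<Inter>{H. maximal_def_conn_subring br D H}"

end

theory Submission
  imports Defs
begin


definition dr :: "'a list set set \<Rightarrow> nat \<Rightarrow> ('a list \<Rightarrow> bool) \<Rightarrow> bool" where
  "dr D n P \<longleftrightarrow> {xs \<in> tuples n. P xs} \<in> D"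

context fixes D :: "'a list set set" assumes df: "definable_family D"
begin

lemmas dfx = df[unfolded definable_family_def]
lemma df_tuples: "tuples n \<in> D" using dfx[THEN conjunct2, THEN conjunct1] by blast
lemma df_inter: "S \<in> D \<Longrightarrow> T \<in> D \<Longrightarrow> S \<inter> T \<in> D" using dfx[THEN conjunct2, THEN conjunct2, THEN conjunct1] by blast
lemma df_compl: "S \<in> D \<Longrightarrow> S \<subseteq> tuples n \<Longrightarrow> tuples n - S \<in> D"
  using dfx[THEN conjunct2, THEN conjunct2, THEN conjunct2, THEN conjunct1] by blast
lemma df_diag: "i < n \<Longrightarrow> j < n \<Longrightarrow> {xs \<in> tuples n. xs ! i = xs ! j} \<in> D"
  using dfx[THEN conjunct2, THEN conjunct2, THEN conjunct2, THEN conjunct2, THEN conjunct1] by blast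
lemma df_const: "i < n \<Longrightarrow> {xs \<in> tuples n. xs ! i = a} \<in> D"
  using dfx[THEN conjunct2, THEN conjunct2, THEN conjunct2, THEN conjunct2, THEN conjunct2, THEN conjunct1] by blast
lemma df_prod: assumes "S \<in> D" "T \<in> D" shows "{xs @ ys | xs ys. xs \<in> S \<and> ys \<in> T} \<in> D"
proof -
  have "\<forall>S\<in>D. \<forall>T\<in>D. {xs @ ys | xs ys. xs \<in> S \<and> ys \<in> T} \<in> D"
    by (rule dfx[THEN conjunct2, THEN conjunct2, THEN conjunct2, THEN conjunct2, THEN conjunct2, THEN conjunct2, THEN conjunct1])
  hence "\<forall>T\<in>D. {xs @ ys | xs ys. xs \<in> S \<and> ys \<in> T} \<in> D" using assms(1) by (rule bspec)
  thus ?thesis using assms(2) by (rule bspec)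
qed
lemma df_take: assumes "S \<in> D" "S \<subseteq> tuples (Suc n)" shows "take n ` S \<in> D"
proof -
  have "\<forall>S\<in>D. \<forall>n. S \<subseteq> tuples (Suc n) \<longrightarrow> take n ` S \<in> D"
    by (rule dfx[THEN conjunct2, THEN conjunct2, THEN conjunct2, THEN conjunct2, THEN conjunct2, THEN conjunct2, THEN conjunct2, THEN conjunct2])
  thus ?thesis using assms by blast
qed

lemma dr_cong: "dr D n P \<Longrightarrow> (\<And>xs. length xs = n \<Longrightarrow> P xs = Q xs) \<Longrightarrow> dr D n Q"
proof -
  assume a: "dr D n P" and b: "\<And>xs. length xs = n \<Longrightarrow> P xs = Q xs"
  have "{xs \<in> tuples n. P xs} = {xs \<in> tuples n. Q xs}" using b by (auto simp: tuples_def)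
  thus ?thesis using a by (simp add: dr_def)
qed

lemma dr_true: "dr D n (\<lambda>_. True)"
  by (simp add: dr_def df_tuples)

lemma dr_and: "dr D n P \<Longrightarrow> dr D n Q \<Longrightarrow> dr D n (\<lambda>xs. P xs \<and> Q xs)"
proof -
  assume "dr D n P" "dr D n Q"
  hence "{xs \<in> tuples n. P xs} \<inter> {xs \<in> tuples n. Q xs} \<in> D"
    by (simp add: dr_def df_inter)
  moreover have "{xs \<in> tuples n. P xs} \<inter> {xs \<in> tuples n. Q xs} = {xs \<in> tuples n. P xs \<and> Q xs}" by auto
  ultimately show ?thesis by (simp add: dr_def)
qed

lemma dr_not: "dr D n P \<Longrightarrow> dr D n (\<lambda>xs. \<not> P xs)"
proof -
  assume "dr D n P"
  hence "tuples n - {xs \<in> tuples n. P xs} \<in> D"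
    unfolding dr_def by (intro df_compl) auto
  moreover have "tuples n - {xs \<in> tuples n. P xs} = {xs \<in> tuples n. \<not> P xs}" by auto
  ultimately show ?thesis by (simp add: dr_def)
qed

lemma dr_eq: "i < n \<Longrightarrow> j < n \<Longrightarrow> dr D n (\<lambda>xs. xs ! i = xs ! j)"
  by (simp add: dr_def df_diag)

lemma dr_const: "i < n \<Longrightarrow> dr D n (\<lambda>xs. xs ! i = a)"
  by (simp add: dr_def df_const)

lemma dr_ex: "dr D (Suc n) P \<Longrightarrow> dr D n (\<lambda>xs. \<exists>y. P (xs @ [y]))"
proof -
  assume a: "dr D (Suc n) P"
  have "take n ` {xs \<in> tuples (Suc n). P xs} \<in> D" using a
    unfolding dr_def by (intro df_take) auto
  moreover have "take n ` {xs \<in> tuples (Suc n). P xs} = {xs \<in> tuples n. \<exists>y. P (xs @ [y])}"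
  proof
    show "take n ` {xs \<in> tuples (Suc n). P xs} \<subseteq> {xs \<in> tuples n. \<exists>y. P (xs @ [y])}"
    proof
      fix x assume "x \<in> take n ` {xs \<in> tuples (Suc n). P xs}"
      then obtain xs where xs: "length xs = Suc n" "P xs" "x = take n xs" by (auto simp: tuples_def)
      then obtain ys y where "xs = ys @ [y]" by (metis length_Suc_conv_rev)
      thus "x \<in> {xs \<in> tuples n. \<exists>y. P (xs @ [y])}" using xs by (auto simp: tuples_def)
    qed
    show "{xs \<in> tuples n. \<exists>y. P (xs @ [y])} \<subseteq> take n ` {xs \<in> tuples (Suc n). P xs}"
    proof
      fix x assume "x \<in> {xs \<in> tuples n. \<exists>y. P (xs @ [y])}"
      then obtain y where "length x = n" "P (x @ [y])" by (auto simp: tuples_def)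
      thus "x \<in> take n ` {xs \<in> tuples (Suc n). P xs}"
        by (intro image_eqI[of _ _ "x @ [y]"]) (auto simp: tuples_def)
    qed
  qed
  ultimately show ?thesis by (simp add: dr_def)
qed

lemma dr_exs: "dr D (m + k) P \<Longrightarrow> dr D m (\<lambda>ys. \<exists>zs. length zs = k \<and> P (ys @ zs))"
proof (induction k arbitrary: P)
  case 0
  hence "dr D m P" by simp
  thus ?case by (rule dr_cong) auto
next
  case (Suc k)
  have "dr D (Suc (m + k)) P" using Suc.prems by simp
  hence "dr D (m + k) (\<lambda>xs. \<exists>y. P (xs @ [y]))" by (rule dr_ex)
  hence "dr D m (\<lambda>ys. \<exists>zs. length zs = k \<and> (\<exists>y. P ((ys @ zs) @ [y])))" by (rule Suc.IH)
  thus ?case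
  proof (rule dr_cong)
    fix ys :: "'a list"
    show "(\<exists>zs. length zs = k \<and> (\<exists>y. P ((ys @ zs) @ [y]))) = (\<exists>zs. length zs = Suc k \<and> P (ys @ zs))"
      by (metis (no_types, lifting) append.assoc length_Suc_conv_rev length_append_singleton)
  qed
qed

lemma dr_prod: "dr D m P \<Longrightarrow> dr D n Q \<Longrightarrow> dr D (m + n) (\<lambda>ws. P (take m ws) \<and> Q (drop m ws))"
proof -
  assume a: "dr D m P" "dr D n Q"
  hence "{xs @ ys | xs ys. xs \<in> {xs \<in> tuples m. P xs} \<and> ys \<in> {xs \<in> tuples n. Q xs}} \<in> D"
    unfolding dr_def by (intro df_prod) auto
  moreover have "{xs @ ys | xs ys. xs \<in> {xs \<in> tuples m. P xs} \<and> ys \<in> {xs \<in> tuples n. Q xs}}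
     = {ws \<in> tuples (m + n). P (take m ws) \<and> Q (drop m ws)}"
  proof
    show "{xs @ ys | xs ys. xs \<in> {xs \<in> tuples m. P xs} \<and> ys \<in> {xs \<in> tuples n. Q xs}}
     \<subseteq> {ws \<in> tuples (m + n). P (take m ws) \<and> Q (drop m ws)}" by (auto simp: tuples_def)
    show "{ws \<in> tuples (m + n). P (take m ws) \<and> Q (drop m ws)} \<subseteq>
      {xs @ ys | xs ys. xs \<in> {xs \<in> tuples m. P xs} \<and> ys \<in> {xs \<in> tuples n. Q xs}}"
    proof
      fix ws assume "ws \<in> {ws \<in> tuples (m + n). P (take m ws) \<and> Q (drop m ws)}"
      thus "ws \<in> {xs @ ys | xs ys. xs \<in> {xs \<in> tuples m. P xs} \<and> ys \<in> {xs \<in> tuples n. Q xs}}"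
      proof -
        assume w: "ws \<in> {ws \<in> tuples (m + n). P (take m ws) \<and> Q (drop m ws)}"
        have "ws = take m ws @ drop m ws" by simp
        moreover have "take m ws \<in> {xs \<in> tuples m. P xs}" "drop m ws \<in> {xs \<in> tuples n. Q xs}"
          using w by (auto simp: tuples_def)
        ultimately show ?thesis by blast
      qed
    qed
  qed
  ultimately show ?thesis by (simp add: dr_def)
qed

lemma dr_eqs: fixes n N :: nat and f g :: "nat \<Rightarrow> nat" shows "(\<And>i. i < n \<Longrightarrow> f i < N \<and> g i < N) \<Longrightarrow> dr D N (\<lambda>ws. \<forall>i<n. ws ! f i = ws ! g i)"
proof (induction n)
  case 0
  show ?case by (rule dr_cong[OF dr_true]) auto
next
  case (Suc n)
  have "dr D N (\<lambda>ws. (\<forall>i<n. ws ! f i = ws ! g i) \<and> ws ! f n = ws ! g n)"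
    using Suc by (intro dr_and dr_eq) auto
  thus ?case by (rule dr_cong) (auto simp: less_Suc_eq)
qed

lemma dr_pull: assumes "dr D n P" "\<And>i. i < n \<Longrightarrow> \<sigma> i < m"
  shows "dr D m (\<lambda>ys. P (map (\<lambda>i. ys ! \<sigma> i) [0..<n]))"
proof -
  have "dr D (m + n) (\<lambda>ws. True \<and> P (drop m ws))"
    using dr_prod[OF dr_true assms(1)] .
  moreover have "dr D (m + n) (\<lambda>ws. \<forall>i<n. ws ! (m + i) = ws ! \<sigma> i)"
    using assms(2) by (intro dr_eqs) (auto intro: trans_less_add1)
  ultimately have "dr D (m + n) (\<lambda>ws. (True \<and> P (drop m ws)) \<and> (\<forall>i<n. ws ! (m + i) = ws ! \<sigma> i))"
    by (rule dr_and)
  hence "dr D m (\<lambda>ys. \<exists>zs. length zs = n \<and> ((True \<and> P (drop m (ys @ zs))) \<and>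
        (\<forall>i<n. (ys @ zs) ! (m + i) = (ys @ zs) ! \<sigma> i)))" by (rule dr_exs)
  thus ?thesis
  proof (rule dr_cong)
    fix ys :: "'a list" assume ly: "length ys = m"
    show "(\<exists>zs. length zs = n \<and> ((True \<and> P (drop m (ys @ zs))) \<and>
        (\<forall>i<n. (ys @ zs) ! (m + i) = (ys @ zs) ! \<sigma> i))) = P (map (\<lambda>i. ys ! \<sigma> i) [0..<n])"
    proof
      assume "\<exists>zs. length zs = n \<and> ((True \<and> P (drop m (ys @ zs))) \<and>
        (\<forall>i<n. (ys @ zs) ! (m + i) = (ys @ zs) ! \<sigma> i))"
      then obtain zs where z0': "length zs = n" "P (drop m (ys @ zs))" "\<forall>i<n. (ys @ zs) ! (m + i) = (ys @ zs) ! \<sigma> i"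
        by blast
      have "drop m (ys @ zs) = zs" using ly by simp
      hence z0: "length zs = n" "P zs" "\<forall>i<n. (ys @ zs) ! (m + i) = (ys @ zs) ! \<sigma> i" using z0' by auto
      have z: "\<forall>i<n. zs ! i = ys ! \<sigma> i"
      proof (intro allI impI)
        fix i assume "i < n"
        hence "(ys @ zs) ! (m + i) = (ys @ zs) ! \<sigma> i" using z0 by blast
        moreover have "(ys @ zs) ! (m + i) = zs ! i" using ly by (metis nth_append_length_plus)
        moreover have "(ys @ zs) ! \<sigma> i = ys ! \<sigma> i" using ly assms(2) \<open>i < n\<close> by (simp add: nth_append)
        ultimately show "zs ! i = ys ! \<sigma> i" by simp
      qed
      have "zs = map (\<lambda>i. ys ! \<sigma> i) [0..<n]" using z z0 by (intro nth_equalityI) auto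
      thus "P (map (\<lambda>i. ys ! \<sigma> i) [0..<n])" using z0 by simp
    next
      assume "P (map (\<lambda>i. ys ! \<sigma> i) [0..<n])"
      thus "\<exists>zs. length zs = n \<and> ((True \<and> P (drop m (ys @ zs))) \<and>
        (\<forall>i<n. (ys @ zs) ! (m + i) = (ys @ zs) ! \<sigma> i))"
      proof (intro exI[of _ "map (\<lambda>i. ys ! \<sigma> i) [0..<n]"] conjI allI impI)
        fix i assume "i < n"
        have "(ys @ map (\<lambda>i. ys ! \<sigma> i) [0..<n]) ! (m + i) = map (\<lambda>i. ys ! \<sigma> i) [0..<n] ! i"
          using ly by (metis nth_append_length_plus)
        also have "\<dots> = ys ! \<sigma> i" using \<open>i < n\<close> by simp
        also have "\<dots> = (ys @ map (\<lambda>i. ys ! \<sigma> i) [0..<n]) ! \<sigma> i"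
          using ly assms(2) \<open>i < n\<close> by (simp add: nth_append)
        finally show "(ys @ map (\<lambda>i. ys ! \<sigma> i) [0..<n]) ! (m + i) = (ys @ map (\<lambda>i. ys ! \<sigma> i) [0..<n]) ! \<sigma> i" .
      qed (simp_all add: ly \<open>P (map (\<lambda>i. ys ! \<sigma> i) [0..<n])\<close>)
    qed
  qed
qed

lemma dr_pull_list: assumes "dr D n P" "length ss = n" "\<forall>s\<in>set ss. s < m"
  shows "dr D m (\<lambda>ys. P (map (\<lambda>i. ys ! i) ss))"
proof -
  have A: "dr D m (\<lambda>ys. P (map (\<lambda>i. ys ! (ss ! i)) [0..<n]))"
    using assms by (intro dr_pull) auto
  have eq0: "\<And>ys. map (\<lambda>i. ys ! (ss ! i)) [0..<n] = map (\<lambda>i. ys ! i) ss"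
    using assms(2) by (intro nth_equalityI) auto
  have eq: "(\<lambda>ys. P (map (\<lambda>i. ys ! (ss ! i)) [0..<n])) = (\<lambda>ys. P (map (\<lambda>i. ys ! i) ss))"
    by (rule ext) (simp only: eq0)
  show ?thesis using A unfolding eq .
qed

end


lemma len1: "length xs = 1 \<Longrightarrow> xs = [xs ! 0]"
  by (cases xs) auto
lemma len2: "length xs = 2 \<Longrightarrow> xs = [xs ! 0, xs ! 1]"
  by (cases xs; cases "tl xs") (auto simp: numeral_2_eq_2)
lemma len3: "length xs = 3 \<Longrightarrow> xs = [xs ! 0, xs ! 1, xs ! 2]"
  by (cases xs; cases "tl xs"; cases "tl (tl xs)") (auto simp: numeral_3_eq_3)
lemma len4: "length xs = 4 \<Longrightarrow> xs = [xs ! 0, xs ! 1, xs ! 2, xs ! 3]"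
  by (cases xs; cases "tl xs"; cases "tl (tl xs)"; cases "tl (tl (tl xs))")
     (auto simp: eval_nat_numeral)

lemma sg_0: "add_subgroup H \<Longrightarrow> 0 \<in> H" by (simp add: add_subgroup_def)
lemma sg_diff: "add_subgroup H \<Longrightarrow> x \<in> H \<Longrightarrow> y \<in> H \<Longrightarrow> x - y \<in> H" by (simp add: add_subgroup_def)
lemma sg_neg: "add_subgroup H \<Longrightarrow> x \<in> H \<Longrightarrow> - x \<in> H"
  using sg_diff[of H 0 x] sg_0[of H] by simp
lemma sg_add: "add_subgroup H \<Longrightarrow> x \<in> H \<Longrightarrow> y \<in> H \<Longrightarrow> x + y \<in> H"
  using sg_diff[of H x "- y"] sg_neg[of H y] by simp
lemma sg_UNIV: "add_subgroup UNIV" by (simp add: add_subgroup_def)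
lemma sg_inter: "add_subgroup H \<Longrightarrow> add_subgroup K \<Longrightarrow> add_subgroup (H \<inter> K)"
  by (simp add: add_subgroup_def)

lemma coset_eq_iff: assumes "add_subgroup K"
  shows "((+) x ` K = (+) y ` K) \<longleftrightarrow> x - y \<in> K"
proof
  assume "(+) x ` K = (+) y ` K"
  hence "x + 0 \<in> (+) y ` K" using sg_0[OF assms] by (metis imageI)
  then obtain k where "k \<in> K" "x = y + k" by auto
  thus "x - y \<in> K" by (simp add: algebra_simps)
next
  assume a: "x - y \<in> K"
  show "(+) x ` K = (+) y ` K"
  proof
    show "(+) x ` K \<subseteq> (+) y ` K"
    proof
      fix z assume "z \<in> (+) x ` K"
      then obtain k where k: "k \<in> K" "z = x + k" by auto
      have "(x - y) + k \<in> K" using sg_add[OF assms a k(1)] .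
      moreover have "z = y + ((x - y) + k)" using k by (simp add: algebra_simps)
      ultimately show "z \<in> (+) y ` K" by blast
    qed
    show "(+) y ` K \<subseteq> (+) x ` K"
    proof
      fix z assume "z \<in> (+) y ` K"
      then obtain k where k: "k \<in> K" "z = y + k" by auto
      have "- (x - y) + k \<in> K" using sg_add[OF assms sg_neg[OF assms a] k(1)] .
      moreover have "z = x + (- (x - y) + k)" using k by (simp add: algebra_simps)
      ultimately show "z \<in> (+) x ` K" by blast
    qed
  qed
qed

lemma coset_disj: assumes "add_subgroup K" "z \<in> (+) x ` K" "z \<in> (+) y ` K"
  shows "(+) x ` K = (+) y ` K"
proof -
  obtain k1 k2 where "k1 \<in> K" "k2 \<in> K" "z = x + k1" "z = y + k2" using assms by auto
  hence "x - y = k2 - k1" by (simp add: algebra_simps)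
  hence "x - y \<in> K" using sg_diff[OF assms(1) \<open>k2 \<in> K\<close> \<open>k1 \<in> K\<close>] by simp
  thus ?thesis using coset_eq_iff[OF assms(1)] by blast
qed

lemma finite_by_key: "finite (g ` S) \<Longrightarrow> (\<And>x y. x \<in> S \<Longrightarrow> y \<in> S \<Longrightarrow> g x = g y \<Longrightarrow> h x = h y)
  \<Longrightarrow> finite (h ` S)"
proof -
  assume f: "finite (g ` S)" and k: "\<And>x y. x \<in> S \<Longrightarrow> y \<in> S \<Longrightarrow> g x = g y \<Longrightarrow> h x = h y"
  have "h ` S \<subseteq> (\<lambda>v. h (inv_into S g v)) ` (g ` S)"
  proof
    fix z assume "z \<in> h ` S"
    then obtain x where x: "x \<in> S" "z = h x" by auto
    have "inv_into S g (g x) \<in> S" "g (inv_into S g (g x)) = g x"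
      using x(1) by (auto intro: inv_into_into f_inv_into_f)
    hence "h (inv_into S g (g x)) = h x" using k x(1) by blast
    thus "z \<in> (\<lambda>v. h (inv_into S g v)) ` (g ` S)" using x by force
  qed
  thus ?thesis using f by (meson finite_imageI finite_subset)
qed

definition setsum :: "'a::ab_group_add set \<Rightarrow> 'a set \<Rightarrow> 'a set" where
  "setsum H K = {h + k | h k. h \<in> H \<and> k \<in> K}"

lemma sg_setsum: "add_subgroup H \<Longrightarrow> add_subgroup K \<Longrightarrow> add_subgroup (setsum H K)"
proof -
  assume h: "add_subgroup H" and k: "add_subgroup K"
  have "0 \<in> setsum H K" unfolding setsum_def using sg_0[OF h] sg_0[OF k] by force
  moreover have "\<forall>x\<in>setsum H K. \<forall>y\<in>setsum H K. x - y \<in> setsum H K"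
  proof (intro ballI)
    fix x y assume "x \<in> setsum H K" "y \<in> setsum H K"
    then obtain h1 k1 h2 k2 where "h1 \<in> H" "k1 \<in> K" "h2 \<in> H" "k2 \<in> K" "x = h1 + k1" "y = h2 + k2"
      unfolding setsum_def by blast
    moreover hence "x - y = (h1 - h2) + (k1 - k2)" by (simp add: algebra_simps)
    ultimately show "x - y \<in> setsum H K" unfolding setsum_def using sg_diff[OF h] sg_diff[OF k] by blast
  qed
  ultimately show ?thesis by (simp add: add_subgroup_def)
qed

lemma setsum_left: "add_subgroup K \<Longrightarrow> H \<subseteq> setsum H K"
proof
  fix x assume "add_subgroup K" "x \<in> H"
  hence "x = x + 0" "0 \<in> K" using sg_0 by auto
  thus "x \<in> setsum H K" unfolding setsum_def using \<open>x \<in> H\<close> by blast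
qed
lemma setsum_right: "add_subgroup H \<Longrightarrow> K \<subseteq> setsum H K"
proof
  fix x assume "add_subgroup H" "x \<in> K"
  hence "x = 0 + x" "0 \<in> H" using sg_0 by auto
  thus "x \<in> setsum H K" unfolding setsum_def using \<open>x \<in> K\<close> by blast
qed
lemma setsum_least: "add_subgroup J \<Longrightarrow> H \<subseteq> J \<Longrightarrow> K \<subseteq> J \<Longrightarrow> setsum H K \<subseteq> J"
  unfolding setsum_def using sg_add by fastforce

lemma gen_sg: "add_subgroup (gen_subgroup S)"
  unfolding gen_subgroup_def add_subgroup_def by auto
lemma gen_sup: "S \<subseteq> gen_subgroup S"
  unfolding gen_subgroup_def by auto
lemma gen_least: "add_subgroup H \<Longrightarrow> S \<subseteq> H \<Longrightarrow> gen_subgroup S \<subseteq> H"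
  unfolding gen_subgroup_def by auto

lemma gen_hom: assumes "\<And>x y. f (x + y) = f x + f y" "add_subgroup H" "\<And>s. s \<in> S \<Longrightarrow> f s \<in> H"
  "z \<in> gen_subgroup S" shows "f z \<in> H"
proof -
  have f0: "f 0 = 0" using assms(1)[of 0 0] by simp
  have fd: "\<And>x y. f (x - y) = f x - f y" using assms(1) by (metis add_diff_cancel eq_diff_eq)
  have "add_subgroup {z. f z \<in> H}" unfolding add_subgroup_def
    using f0 fd sg_0[OF assms(2)] sg_diff[OF assms(2)] by auto
  moreover have "S \<subseteq> {z. f z \<in> H}" using assms(3) by auto
  ultimately show ?thesis using gen_least assms(4) by blast
qed



locale RLR =
  fixes br :: "'a::ab_group_add \<Rightarrow> 'a \<Rightarrow> 'a" and D :: "'a list set set" and rk :: "'a list set \<Rightarrow> nat"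
  assumes rlr: "ranked_lie_ring br D rk"
begin

lemma lie: "lie_ring br" using rlr by (simp add: ranked_lie_ring_def)
lemma rkd: "ranked D rk" using rlr by (simp add: ranked_lie_ring_def)
lemma df: "definable_family D" using rkd by (simp add: ranked_def)
lemma addG: "{[x, y, x + y] | (x::'a) y. True} \<in> D" using rlr by (simp add: ranked_lie_ring_def)
lemma brG: "{[x, y, br x y] | (x::'a) y. True} \<in> D" using rlr by (simp add: ranked_lie_ring_def)

lemma bil1: "br (x + y) z = br x z + br y z" using lie by (simp add: lie_ring_def)
lemma bil2: "br x (y + z) = br x y + br x z" using lie by (simp add: lie_ring_def)
lemma alt: "br x x = 0" using lie by (simp add: lie_ring_def)
lemma jac: "br x (br y z) + br y (br z x) + br z (br x y) = 0" using lie by (simp add: lie_ring_def)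

lemma br0l[simp]: "br 0 z = 0" using bil1[of 0 0 z] by simp
lemma br0r[simp]: "br z 0 = 0" using bil2[of z 0 0] by simp
lemma brnegl: "br (- x) z = - br x z"
proof -
  have "br x z + br (- x) z = 0" using bil1[of x "- x" z] by simp
  thus ?thesis by (metis minus_unique)
qed
lemma brnegr: "br z (- x) = - br z x"
proof -
  have "br z x + br z (- x) = 0" using bil2[of z x "- x"] by simp
  thus ?thesis by (metis minus_unique)
qed
lemma brdiffl: "br (x - y) z = br x z - br y z" using bil1[of x "- y" z] brnegl by simp
lemma brdiffr: "br z (x - y) = br z x - br z y" using bil2[of z x "- y"] brnegr by simp
lemma anti: "br x y = - br y x"
proof -
  have "br (x + y) (x + y) = br x x + br x y + (br y x + br y y)" by (simp add: bil1 bil2 add.assoc)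
  hence "br x y + br y x = 0" by (simp add: alt)
  thus ?thesis by (simp add: eq_neg_iff_add_eq_0)
qed
lemma jac2: "br x (br a b) = br a (br x b) + br (br x a) b"
proof -
  have "br x (br a b) + br a (br b x) + br b (br x a) = 0" by (rule jac)
  moreover have "br a (br b x) = - br a (br x b)" using anti[of b x] brnegr by simp
  moreover have "br b (br x a) = - br (br x a) b" by (rule anti)
  ultimately show ?thesis by (simp add: algebra_simps eq_neg_iff_add_eq_0)
qed

abbreviation T :: "'a set \<Rightarrow> 'a list set" where "T H \<equiv> (\<lambda>x. [x]) ` H"

definition defmap :: "('a \<Rightarrow> 'a) \<Rightarrow> bool" where
  "defmap f \<longleftrightarrow> dr D 2 (\<lambda>xs. xs ! 1 = f (xs ! 0))"

lemma T_eq: "T H = {xs \<in> tuples 1. xs ! 0 \<in> H}"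
proof
  show "T H \<subseteq> {xs \<in> tuples 1. xs ! 0 \<in> H}" by (auto simp: tuples_def)
  show "{xs \<in> tuples 1. xs ! 0 \<in> H} \<subseteq> T H"
  proof
    fix xs assume "xs \<in> {xs \<in> tuples 1. xs ! 0 \<in> H}"
    hence "length xs = 1" "xs ! 0 \<in> H" by (auto simp: tuples_def)
    thus "xs \<in> T H" using len1 by (metis imageI)
  qed
qed

lemma def_iff: "definable D H \<longleftrightarrow> dr D 1 (\<lambda>xs. xs ! 0 \<in> H)"
  by (simp add: definable_def dr_def T_eq)

lemma dr_add3: "dr D 3 (\<lambda>xs. xs ! 2 = xs ! 0 + xs ! 1)"
proof -
  have "{[x, y, x + y] | (x::'a) y. True} = {xs \<in> tuples 3. xs ! 2 = xs ! 0 + xs ! 1}"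
  proof
    show "{[x, y, x + y] | (x::'a) y. True} \<subseteq> {xs \<in> tuples 3. xs ! 2 = xs ! 0 + xs ! 1}"
      by (auto simp: tuples_def)
    show "{xs \<in> tuples 3. xs ! 2 = xs ! 0 + xs ! 1} \<subseteq> {[x, y, x + y] | (x::'a) y. True}"
    proof
      fix xs :: "'a list" assume "xs \<in> {xs \<in> tuples 3. xs ! 2 = xs ! 0 + xs ! 1}"
      hence "length xs = 3" "xs ! 2 = xs ! 0 + xs ! 1" by (auto simp: tuples_def)
      moreover obtain a b c where "xs = [a, b, c]" using len3[OF \<open>length xs = 3\<close>] by blast
      ultimately have "xs = [xs ! 0, xs ! 1, xs ! 0 + xs ! 1]" by simp
      thus "xs \<in> {[x, y, x + y] | (x::'a) y. True}" by blast
    qed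
  qed
  hence "{xs \<in> tuples 3. xs ! 2 = xs ! 0 + xs ! 1} \<in> D" using addG by (simp only:)
  thus ?thesis unfolding dr_def .
qed

lemma dr_br3: "dr D 3 (\<lambda>xs. xs ! 2 = br (xs ! 0) (xs ! 1))"
proof -
  have "{[x, y, br x y] | (x::'a) y. True} = {xs \<in> tuples 3. xs ! 2 = br (xs ! 0) (xs ! 1)}"
  proof
    show "{[x, y, br x y] | (x::'a) y. True} \<subseteq> {xs \<in> tuples 3. xs ! 2 = br (xs ! 0) (xs ! 1)}"
      by (auto simp: tuples_def)
    show "{xs \<in> tuples 3. xs ! 2 = br (xs ! 0) (xs ! 1)} \<subseteq> {[x, y, br x y] | (x::'a) y. True}"
    proof
      fix xs :: "'a list" assume "xs \<in> {xs \<in> tuples 3. xs ! 2 = br (xs ! 0) (xs ! 1)}"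
      hence "length xs = 3" "xs ! 2 = br (xs ! 0) (xs ! 1)" by (auto simp: tuples_def)
      moreover obtain a b c where "xs = [a, b, c]" using len3[OF \<open>length xs = 3\<close>] by blast
      ultimately have "xs = [xs ! 0, xs ! 1, br (xs ! 0) (xs ! 1)]" by simp
      thus "xs \<in> {[x, y, br x y] | (x::'a) y. True}" by blast
    qed
  qed
  hence "{xs \<in> tuples 3. xs ! 2 = br (xs ! 0) (xs ! 1)} \<in> D" using brG by (simp only:)
  thus ?thesis unfolding dr_def .
qed

lemmas drc = dr_cong[OF df] 
lemmas dra = dr_and[OF df]
lemma drx: "dr D 2 P \<Longrightarrow> dr D 1 (\<lambda>xs. \<exists>y. P (xs @ [y]))"
proof -
  have e: "Suc 1 = (2::nat)" by simp
  show "dr D 2 P \<Longrightarrow> dr D 1 (\<lambda>xs. \<exists>y. P (xs @ [y]))" using dr_ex[OF df, of 1 P] unfolding e .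
qed
lemma drx3: "dr D 3 P \<Longrightarrow> dr D 2 (\<lambda>xs. \<exists>y. P (xs @ [y]))"
proof -
  have e: "Suc 2 = (3::nat)" by simp
  show "dr D 3 P \<Longrightarrow> dr D 2 (\<lambda>xs. \<exists>y. P (xs @ [y]))" using dr_ex[OF df, of 2 P] unfolding e .
qed
lemma drx4: "dr D 4 P \<Longrightarrow> dr D 3 (\<lambda>xs. \<exists>y. P (xs @ [y]))"
proof -
  have e: "Suc 3 = (4::nat)" by simp
  show "dr D 4 P \<Longrightarrow> dr D 3 (\<lambda>xs. \<exists>y. P (xs @ [y]))" using dr_ex[OF df, of 3 P] unfolding e .
qed
lemmas drp = dr_pull_list[OF df]

lemma def_image: assumes "definable D H" "defmap f" shows "definable D (f ` H)"
proof -
  have a: "dr D 2 (\<lambda>ys. ys ! 1 \<in> H)"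
    using drp[OF assms(1)[unfolded def_iff], of "[1]"] by simp
  have b: "dr D 2 (\<lambda>ys. ys ! 0 = f (ys ! 1))"
    using drp[OF assms(2)[unfolded defmap_def], of "[1,0]"] by simp
  have "dr D 1 (\<lambda>xs. \<exists>y. (xs @ [y]) ! 1 \<in> H \<and> (xs @ [y]) ! 0 = f ((xs @ [y]) ! 1))"
    using drx[OF dra[OF a b]] by simp
  hence "dr D 1 (\<lambda>xs. xs ! 0 \<in> f ` H)"
  proof (rule drc)
    fix xs :: "'a list" assume "length xs = 1"
    hence "xs = [xs ! 0]" by (rule len1)
    then obtain a where "xs = [a]" by blast
    thus "(\<exists>y. (xs @ [y]) ! 1 \<in> H \<and> (xs @ [y]) ! 0 = f ((xs @ [y]) ! 1)) = (xs ! 0 \<in> f ` H)"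
      by auto
  qed
  thus ?thesis by (simp add: def_iff)
qed

lemma def_preimage: assumes "definable D K" "defmap f" shows "definable D {x. f x \<in> K}"
proof -
  have a: "dr D 2 (\<lambda>ys. ys ! 1 \<in> K)"
    using drp[OF assms(1)[unfolded def_iff], of "[1]"] by simp
  have b: "dr D 2 (\<lambda>ys. ys ! 1 = f (ys ! 0))"
    using assms(2) by (simp add: defmap_def)
  have "dr D 1 (\<lambda>xs. \<exists>y. (xs @ [y]) ! 1 \<in> K \<and> (xs @ [y]) ! 1 = f ((xs @ [y]) ! 0))"
    using drx[OF dra[OF a b]] by simp
  hence "dr D 1 (\<lambda>xs. xs ! 0 \<in> {x. f x \<in> K})"
  proof (rule drc)
    fix xs :: "'a list" assume "length xs = 1"
    hence "xs = [xs ! 0]" by (rule len1)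
    then obtain a where "xs = [a]" by blast
    thus "(\<exists>y. (xs @ [y]) ! 1 \<in> K \<and> (xs @ [y]) ! 1 = f ((xs @ [y]) ! 0)) = (xs ! 0 \<in> {x. f x \<in> K})"
      by auto
  qed
  thus ?thesis by (simp add: def_iff)
qed

lemma def_inter: "definable D H \<Longrightarrow> definable D K \<Longrightarrow> definable D (H \<inter> K)"
proof -
  assume "definable D H" "definable D K"
  hence "dr D 1 (\<lambda>xs. xs ! 0 \<in> H \<and> xs ! 0 \<in> K)" by (intro dra) (simp_all add: def_iff)
  thus ?thesis by (simp add: def_iff)
qed

lemma def_UNIV: "definable D UNIV"
  unfolding def_iff by (rule drc[OF dr_true[OF df]]) simp

lemma def_single: "definable D {a}"
  unfolding def_iff by (rule drc[OF dr_const[OF df, of 0 1 a]]) auto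

lemma def_setsum: assumes "definable D H" "definable D K" shows "definable D (setsum H K)"
proof -
  have a: "dr D 3 (\<lambda>ys. ys ! 1 \<in> H)"
    using drp[OF assms(1)[unfolded def_iff], of "[1]"] by simp
  have b: "dr D 3 (\<lambda>ys. ys ! 2 \<in> K)"
    using drp[OF assms(2)[unfolded def_iff], of "[2]"] by simp
  have c: "dr D 3 (\<lambda>ys. ys ! 0 = ys ! 1 + ys ! 2)"
    using drp[OF dr_add3, of "[1,2,0]"] by simp
  have "dr D 2 (\<lambda>xs. \<exists>y. ((xs @ [y]) ! 1 \<in> H \<and> (xs @ [y]) ! 2 \<in> K) \<and> (xs @ [y]) ! 0 = (xs @ [y]) ! 1 + (xs @ [y]) ! 2)"
    using drx3[OF dra[OF dra[OF a b] c]] by simp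
  hence "dr D 1 (\<lambda>zs. \<exists>z. \<exists>y. (((zs @ [z]) @ [y]) ! 1 \<in> H \<and> ((zs @ [z]) @ [y]) ! 2 \<in> K) \<and>
        ((zs @ [z]) @ [y]) ! 0 = ((zs @ [z]) @ [y]) ! 1 + ((zs @ [z]) @ [y]) ! 2)"
    by (rule drx)
  hence "dr D 1 (\<lambda>xs. xs ! 0 \<in> setsum H K)"
  proof (rule drc)
    fix xs :: "'a list" assume "length xs = 1"
    hence "xs = [xs ! 0]" by (rule len1)
    then obtain a where "xs = [a]" by blast
    thus "(\<exists>z. \<exists>y. (((xs @ [z]) @ [y]) ! 1 \<in> H \<and> ((xs @ [z]) @ [y]) ! 2 \<in> K) \<and>
        ((xs @ [z]) @ [y]) ! 0 = ((xs @ [z]) @ [y]) ! 1 + ((xs @ [z]) @ [y]) ! 2) = (xs ! 0 \<in> setsum H K)"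
      unfolding setsum_def by (simp only: \<open>xs = [a]\<close> append.simps nth_Cons_0 nth_Cons_Suc One_nat_def numeral_2_eq_2) blast
  qed
  thus ?thesis by (simp add: def_iff)
qed

lemma defmap_br: "defmap (br a)"
proof -
  have a: "dr D 3 (\<lambda>ys. ys ! 2 = a)" by (rule dr_const[OF df]) simp
  have b: "dr D 3 (\<lambda>ys. ys ! 1 = br (ys ! 2) (ys ! 0))"
    using drp[OF dr_br3, of "[2,0,1]"] by simp
  have "dr D 2 (\<lambda>xs. \<exists>y. (xs @ [y]) ! 2 = a \<and> (xs @ [y]) ! 1 = br ((xs @ [y]) ! 2) ((xs @ [y]) ! 0))"
    using drx3[OF dra[OF a b]] by simp
  hence "dr D 2 (\<lambda>xs. xs ! 1 = br a (xs ! 0))"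
  proof (rule drc)
    fix xs :: "'a list" assume "length xs = 2"
    hence "xs = [xs ! 0, xs ! 1]" by (rule len2)
    then obtain u v where "xs = [u, v]" by blast
    thus "(\<exists>y. (xs @ [y]) ! 2 = a \<and> (xs @ [y]) ! 1 = br ((xs @ [y]) ! 2) ((xs @ [y]) ! 0)) = (xs ! 1 = br a (xs ! 0))"
      by auto
  qed
  thus ?thesis by (simp add: defmap_def)
qed

lemma defmap_transl: "defmap ((+) a)"
proof -
  have a: "dr D 3 (\<lambda>ys. ys ! 2 = a)" by (rule dr_const[OF df]) simp
  have b: "dr D 3 (\<lambda>ys. ys ! 1 = ys ! 2 + ys ! 0)"
    using drp[OF dr_add3, of "[2,0,1]"] by simp
  have "dr D 2 (\<lambda>xs. \<exists>y. (xs @ [y]) ! 2 = a \<and> (xs @ [y]) ! 1 = (xs @ [y]) ! 2 + (xs @ [y]) ! 0)"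
    using drx3[OF dra[OF a b]] by simp
  hence "dr D 2 (\<lambda>xs. xs ! 1 = a + xs ! 0)"
  proof (rule drc)
    fix xs :: "'a list" assume "length xs = 2"
    hence "xs = [xs ! 0, xs ! 1]" by (rule len2)
    then obtain u v where "xs = [u, v]" by blast
    thus "(\<exists>y. (xs @ [y]) ! 2 = a \<and> (xs @ [y]) ! 1 = (xs @ [y]) ! 2 + (xs @ [y]) ! 0) = (xs ! 1 = a + xs ! 0)"
      by auto
  qed
  thus ?thesis by (simp add: defmap_def)
qed

lemma defmap_id: "defmap (\<lambda>x. x)"
  unfolding defmap_def by (rule dr_eq[OF df]) auto

lemma defmap_plus: assumes "defmap f" "defmap g" shows "defmap (\<lambda>x. f x + g x)"
proof -
  have a: "dr D 4 (\<lambda>ys. ys ! 2 = f (ys ! 0))"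
    using drp[OF assms(1)[unfolded defmap_def], of "[0,2]"] by simp
  have b: "dr D 4 (\<lambda>ys. ys ! 3 = g (ys ! 0))"
    using drp[OF assms(2)[unfolded defmap_def], of "[0,3]"] by simp
  have c: "dr D 4 (\<lambda>ys. ys ! 1 = ys ! 2 + ys ! 3)"
    using drp[OF dr_add3, of "[2,3,1]"] by simp
  have "dr D 3 (\<lambda>xs. \<exists>y. ((xs @ [y]) ! 2 = f ((xs @ [y]) ! 0) \<and> (xs @ [y]) ! 3 = g ((xs @ [y]) ! 0)) \<and> (xs @ [y]) ! 1 = (xs @ [y]) ! 2 + (xs @ [y]) ! 3)"
    using drx4[OF dra[OF dra[OF a b] c]] by simp
  hence "dr D 2 (\<lambda>zs. \<exists>z. \<exists>y. (((zs @ [z]) @ [y]) ! 2 = f (((zs @ [z]) @ [y]) ! 0) \<and> ((zs @ [z]) @ [y]) ! 3 = g (((zs @ [z]) @ [y]) ! 0)) \<and> ((zs @ [z]) @ [y]) ! 1 = ((zs @ [z]) @ [y]) ! 2 + ((zs @ [z]) @ [y]) ! 3)"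
    by (rule drx3)
  hence "dr D 2 (\<lambda>xs. xs ! 1 = f (xs ! 0) + g (xs ! 0))"
  proof (rule drc)
    fix xs :: "'a list" assume "length xs = 2"
    hence "xs = [xs ! 0, xs ! 1]" by (rule len2)
    then obtain u v where "xs = [u, v]" by blast
    thus "(\<exists>z. \<exists>y. (((xs @ [z]) @ [y]) ! 2 = f (((xs @ [z]) @ [y]) ! 0) \<and> ((xs @ [z]) @ [y]) ! 3 = g (((xs @ [z]) @ [y]) ! 0)) \<and> ((xs @ [z]) @ [y]) ! 1 = ((xs @ [z]) @ [y]) ! 2 + ((xs @ [z]) @ [y]) ! 3) = (xs ! 1 = f (xs ! 0) + g (xs ! 0))"
      by (simp only: \<open>xs = [u, v]\<close> append.simps nth_Cons_0 nth_Cons_Suc One_nat_def numeral_2_eq_2 numeral_3_eq_3) blast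
  qed
  thus ?thesis by (simp add: defmap_def)
qed

end


context RLR begin

lemmas rkx = rkd[unfolded ranked_def]

lemma rk_mono: assumes "A \<in> D" "A \<noteq> {}"
  shows "(Suc k \<le> rk A) = (\<exists>F. infinite F \<and> F \<subseteq> D \<and> pairwise disjnt F \<and>
               (\<forall>X\<in>F. X \<subseteq> A \<and> X \<noteq> {} \<and> k \<le> rk X))"
  using rkx[THEN conjunct2, THEN conjunct1, rule_format, OF assms] .

lemma rk_add: assumes "A \<in> D" "B \<in> D" "A \<subseteq> tuples n" "B \<subseteq> tuples m" "B \<noteq> {}" "f ` A \<subseteq> B"
  "{a @ f a | a. a \<in> A} \<in> D" "\<forall>b\<in>B. {a\<in>A. f a = b} \<noteq> {} \<and> rk {a\<in>A. f a = b} = k"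
  shows "rk A = rk B + k"
  using rkx[THEN conjunct2, THEN conjunct2, THEN conjunct2, THEN conjunct1, rule_format, OF assms(1-7) assms(8)[rule_format]] .

lemma T_def: "definable D H \<Longrightarrow> T H \<in> D" by (simp add: definable_def)

lemma rk_single: "rk (T {x}) = 0"
proof (rule ccontr)
  assume "rk (T {x}) \<noteq> 0"
  hence "Suc 0 \<le> rk (T {x})" by simp
  then obtain F where F: "infinite F" "\<forall>X\<in>F. X \<subseteq> T {x} \<and> X \<noteq> {} \<and> 0 \<le> rk X"
    using rk_mono[OF T_def[OF def_single] ] by auto
  have "F \<subseteq> {{[x]}}"
  proof
    fix X assume "X \<in> F"
    hence "X \<subseteq> {[x]}" "X \<noteq> {}" using F(2) by auto
    thus "X \<in> {{[x]}}" by auto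
  qed
  hence "finite F" by (rule finite_subset) simp
  thus False using F(1) by simp
qed

lemma rk_transl: assumes "definable D K" "add_subgroup K" shows "rk (T ((+) c ` K)) = rk (T K)"
proof -
  let ?A = "T ((+) c ` K)" and ?B = "T K" and ?f = "\<lambda>xs::'a list. [xs ! 0 - c]"
  have dA: "definable D ((+) c ` K)" by (rule def_image[OF assms(1) defmap_transl])
  have A: "?A \<in> D" by (rule T_def[OF dA])
  have B: "?B \<in> D" by (rule T_def[OF assms(1)])
  have At: "?A \<subseteq> tuples 1" "?B \<subseteq> tuples 1" by (auto simp: tuples_def)
  have Bne: "?B \<noteq> {}" using sg_0[OF assms(2)] by auto
  have fA: "?f ` ?A \<subseteq> ?B" by auto
  have a: "dr D 2 (\<lambda>ys. ys ! 0 \<in> (+) c ` K)"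
    using drp[OF dA[unfolded def_iff], of "[0]"] by simp
  have b: "dr D 2 (\<lambda>ys. ys ! 1 = - c + ys ! 0)"
    using defmap_transl[of "- c"] by (simp add: defmap_def)
  have "{a @ ?f a | a. a \<in> ?A} = {xs \<in> tuples 2. xs ! 0 \<in> (+) c ` K \<and> xs ! 1 = - c + xs ! 0}"
  proof
    show "{a @ ?f a | a. a \<in> ?A} \<subseteq> {xs \<in> tuples 2. xs ! 0 \<in> (+) c ` K \<and> xs ! 1 = - c + xs ! 0}"
      by (auto simp: tuples_def)
    show "{xs \<in> tuples 2. xs ! 0 \<in> (+) c ` K \<and> xs ! 1 = - c + xs ! 0} \<subseteq> {a @ ?f a | a. a \<in> ?A}"
    proof
      fix xs :: "'a list" assume xs: "xs \<in> {xs \<in> tuples 2. xs ! 0 \<in> (+) c ` K \<and> xs ! 1 = - c + xs ! 0}"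
      hence "length xs = 2" by (simp add: tuples_def)
      then obtain u v where uv: "xs = [u, v]" using len2 by blast
      hence "u \<in> (+) c ` K" "v = - c + u" using xs by auto
      hence "xs = [u] @ ?f [u]" "[u] \<in> ?A" using uv by auto
      thus "xs \<in> {a @ ?f a | a. a \<in> ?A}" by blast
    qed
  qed
  moreover have "dr D 2 (\<lambda>xs. xs ! 0 \<in> (+) c ` K \<and> xs ! 1 = - c + xs ! 0)" by (rule dra[OF a b])
  ultimately have G: "{a @ ?f a | a. a \<in> ?A} \<in> D" by (simp add: dr_def)
  have fib: "\<forall>b\<in>?B. {a\<in>?A. ?f a = b} \<noteq> {} \<and> rk {a\<in>?A. ?f a = b} = 0"
  proof
    fix b assume "b \<in> ?B"
    then obtain k where k: "k \<in> K" "b = [k]" by auto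
    have "{a\<in>?A. ?f a = b} = T {c + k}" using k by auto
    thus "{a\<in>?A. ?f a = b} \<noteq> {} \<and> rk {a\<in>?A. ?f a = b} = 0" using rk_single by simp
  qed
  have "rk ?A = rk ?B + 0" by (rule rk_add[OF A B At Bne fA G fib])
  thus ?thesis by simp
qed

lemma rk_lt: assumes dH: "definable D H" "add_subgroup H" and dK: "definable D K" "add_subgroup K"
  and sub: "K \<subseteq> H" and inf: "infinite ((\<lambda>x. (+) x ` K) ` H)"
  shows "Suc (rk (T K)) \<le> rk (T H)"
proof -
  let ?C = "(\<lambda>x. (+) x ` K) ` H"
  let ?F = "T ` ?C"
  have injT: "inj_on T ?C" by (rule inj_on_image) (auto simp: inj_on_def)
  have "infinite ?F" using inf finite_image_iff[OF injT] by simp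
  moreover have "?F \<subseteq> D" using T_def[OF def_image[OF dK(1) defmap_transl]] by auto
  moreover have "pairwise disjnt ?F"
  proof (unfold pairwise_def, intro ballI impI)
    fix X Y assume X: "X \<in> ?F" and Y: "Y \<in> ?F" and ne: "X \<noteq> Y"
    then obtain x y where xy: "x \<in> H" "y \<in> H" "X = T ((+) x ` K)" "Y = T ((+) y ` K)" by auto
    show "disjnt X Y"
    proof (rule ccontr)
      assume "\<not> disjnt X Y"
      then obtain z where "z \<in> X" "z \<in> Y" unfolding disjnt_def by auto
      then obtain u where "u \<in> (+) x ` K" "u \<in> (+) y ` K" using xy by auto
      hence "(+) x ` K = (+) y ` K" using coset_disj[OF dK(2)] by blast
      thus False using ne xy by simp
    qed
  qed
  moreover have "\<forall>X\<in>?F. X \<subseteq> T H \<and> X \<noteq> {} \<and> rk (T K) \<le> rk X"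
  proof
    fix X assume "X \<in> ?F"
    then obtain x where x: "x \<in> H" "X = T ((+) x ` K)" by auto
    have "(+) x ` K \<subseteq> H" using x(1) sub sg_add[OF dH(2)] by auto
    moreover have "(+) x ` K \<noteq> {}" using sg_0[OF dK(2)] by auto
    moreover have "rk X = rk (T K)" using x rk_transl[OF dK] by simp
    ultimately show "X \<subseteq> T H \<and> X \<noteq> {} \<and> rk (T K) \<le> rk X" using x by auto
  qed
  ultimately have "\<exists>F. infinite F \<and> F \<subseteq> D \<and> pairwise disjnt F \<and>
               (\<forall>X\<in>F. X \<subseteq> T H \<and> X \<noteq> {} \<and> rk (T K) \<le> rk X)" by blast
  moreover have "T H \<noteq> {}" using sg_0[OF dH(2)] by auto
  ultimately show ?thesis using rk_mono[OF T_def[OF dH(1)]] by blast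
qed

definition dcs :: "'a set \<Rightarrow> bool" where
  "dcs H \<longleftrightarrow> add_subgroup H \<and> definable D H \<and> connected D H"

lemma conn_image: assumes H: "dcs H" and f: "defmap f" and add: "\<And>x y. f (x + y) = f x + f y"
  shows "dcs (f ` H)"
proof -
  have f0: "f 0 = 0" using add[of 0 0] by simp
  have fd: "\<And>x y. f (x - y) = f x - f y" using add by (metis diff_add_cancel eq_diff_eq)
  have sH: "add_subgroup H" "definable D H" "connected D H" using H by (auto simp: dcs_def)
  have sg: "add_subgroup (f ` H)" unfolding add_subgroup_def
  proof (intro conjI ballI)
    show "0 \<in> f ` H" using f0 sg_0[OF sH(1)] by (metis imageI)
    fix x y assume "x \<in> f ` H" "y \<in> f ` H"
    then obtain a b where "a \<in> H" "b \<in> H" "x = f a" "y = f b" by auto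
    thus "x - y \<in> f ` H" using fd sg_diff[OF sH(1)] by (metis imageI)
  qed
  have cn: "connected D (f ` H)" unfolding connected_def
  proof (intro allI impI)
    fix K assume K: "add_subgroup K" "K \<subseteq> f ` H" "definable D K" "finite ((\<lambda>x. (+) x ` K) ` (f ` H))"
    let ?P = "H \<inter> {x. f x \<in> K}"
    have Psg: "add_subgroup ?P" unfolding add_subgroup_def
      using sg_0[OF sH(1)] sg_0[OF K(1)] f0 fd sg_diff[OF sH(1)] sg_diff[OF K(1)] by auto
    have Pdef: "definable D ?P" by (rule def_inter[OF sH(2) def_preimage[OF K(3) f]])
    have "finite ((\<lambda>x. (+) x ` ?P) ` H)"
    proof (rule finite_by_key[of "\<lambda>x. (+) (f x) ` K"])
      show "finite ((\<lambda>x. (+) (f x) ` K) ` H)" using K(4) by (simp add: image_image)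
      fix x y assume xy: "x \<in> H" "y \<in> H" "(+) (f x) ` K = (+) (f y) ` K"
      hence "f x - f y \<in> K" using coset_eq_iff[OF K(1)] by blast
      hence "x - y \<in> ?P" using fd sg_diff[OF sH(1) xy(1) xy(2)] by auto
      thus "(+) x ` ?P = (+) y ` ?P" using coset_eq_iff[OF Psg] by blast
    qed
    hence "?P = H" using sH(3) Psg Pdef unfolding connected_def by blast
    hence "f ` H \<subseteq> K" by auto
    thus "K = f ` H" using K(2) by blast
  qed
  show ?thesis using sg cn def_image[OF sH(2) f] by (simp add: dcs_def)
qed

lemma conn_sum: assumes H: "dcs H" and K: "dcs K" shows "dcs (setsum H K)"
proof -
  have sH: "add_subgroup H" "definable D H" "connected D H" using H by (auto simp: dcs_def)
  have sK: "add_subgroup K" "definable D K" "connected D K" using K by (auto simp: dcs_def)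
  have sg: "add_subgroup (setsum H K)" by (rule sg_setsum[OF sH(1) sK(1)])
  have key: "\<And>L. add_subgroup L \<Longrightarrow> definable D L \<Longrightarrow> connected D L \<Longrightarrow> L \<subseteq> setsum H K \<Longrightarrow>
     add_subgroup J \<Longrightarrow> J \<subseteq> setsum H K \<Longrightarrow> definable D J \<Longrightarrow> finite ((\<lambda>x. (+) x ` J) ` setsum H K)
     \<Longrightarrow> L \<subseteq> J" for J
  proof -
    fix L assume L: "add_subgroup L" "definable D L" "connected D L" "L \<subseteq> setsum H K"
      and J: "add_subgroup J" "J \<subseteq> setsum H K" "definable D J" "finite ((\<lambda>x. (+) x ` J) ` setsum H K)"
    let ?P = "J \<inter> L"
    have Psg: "add_subgroup ?P" by (rule sg_inter[OF J(1) L(1)])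
    have Pdef: "definable D ?P" by (rule def_inter[OF J(3) L(2)])
    have "finite ((\<lambda>x. (+) x ` ?P) ` L)"
    proof (rule finite_by_key[of "\<lambda>x. (+) x ` J"])
      show "finite ((\<lambda>x. (+) x ` J) ` L)" using J(4) L(4) by (meson finite_subset image_mono)
      fix x y assume xy: "x \<in> L" "y \<in> L" "(+) x ` J = (+) y ` J"
      hence "x - y \<in> J" using coset_eq_iff[OF J(1)] by blast
      hence "x - y \<in> ?P" using sg_diff[OF L(1) xy(1) xy(2)] by auto
      thus "(+) x ` ?P = (+) y ` ?P" using coset_eq_iff[OF Psg] by blast
    qed
    hence "?P = L" using L(3) Psg Pdef unfolding connected_def by blast
    thus "L \<subseteq> J" by blast
  qed
  have cn: "connected D (setsum H K)" unfolding connected_def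
  proof (intro allI impI)
    fix J assume J: "add_subgroup J" "J \<subseteq> setsum H K" "definable D J" "finite ((\<lambda>x. (+) x ` J) ` setsum H K)"
    have "H \<subseteq> J" using key[OF sH setsum_left[OF sK(1)] J] .
    moreover have "K \<subseteq> J" using key[OF sK setsum_right[OF sH(1)] J] .
    ultimately have "setsum H K \<subseteq> J" using setsum_least[OF J(1)] by blast
    thus "J = setsum H K" using J(2) by blast
  qed
  show ?thesis using sg cn def_setsum[OF sH(2) sK(2)] by (simp add: dcs_def)
qed

lemma dcs_zero: "dcs {0}"
proof -
  have "add_subgroup {0}" by (simp add: add_subgroup_def)
  moreover have "connected D {0}" unfolding connected_def using sg_0 by blast
  ultimately show ?thesis using def_single by (simp add: dcs_def)
qed

lemma rk_le_univ: assumes cu: "connected D UNIV" and S: "dcs S" shows "rk (T S) \<le> rk (T UNIV)"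
proof (cases "finite ((\<lambda>x. (+) x ` S) ` UNIV)")
  case True
  hence "S = UNIV" using cu S unfolding connected_def dcs_def by blast
  thus ?thesis by simp
next
  case False
  have "Suc (rk (T S)) \<le> rk (T UNIV)"
    using S False by (intro rk_lt) (auto simp: dcs_def def_UNIV sg_UNIV)
  thus ?thesis by simp
qed

lemma dcs_gen: assumes cu: "connected D UNIV" and Fs: "\<And>F. F \<in> \<F> \<Longrightarrow> dcs F"
  shows "dcs (gen_subgroup (\<Union>\<F>))"
proof -
  let ?G = "gen_subgroup (\<Union>\<F>)"
  let ?P = "\<lambda>S. dcs S \<and> S \<subseteq> ?G"
  have P0: "?P {0}" using dcs_zero sg_0[OF gen_sg] by auto
  have bnd: "\<forall>S. ?P S \<longrightarrow> rk (T S) < Suc (rk (T UNIV))" using rk_le_univ[OF cu] by (simp add: le_imp_less_Suc)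
  obtain S where S: "?P S" and Smax: "\<forall>S'. ?P S' \<longrightarrow> rk (T S') \<le> rk (T S)"
    using ex_has_greatest_nat[of ?P "{0}" "\<lambda>S. rk (T S)", OF P0 bnd] by blast
  have sS: "add_subgroup S" "definable D S" "connected D S" using S by (auto simp: dcs_def)
  have "\<Union>\<F> \<subseteq> S"
  proof
    fix z assume "z \<in> \<Union>\<F>"
    then obtain F where F: "F \<in> \<F>" "z \<in> F" by auto
    have dF: "dcs F" by (rule Fs[OF F(1)])
    have sF: "add_subgroup F" using dF by (simp add: dcs_def)
    let ?S' = "setsum S F"
    have dS': "dcs ?S'" by (rule conn_sum[OF S[THEN conjunct1] dF])
    have "F \<subseteq> ?G" using F(1) gen_sup by blast
    hence "?S' \<subseteq> ?G" using setsum_least[OF gen_sg] S by blast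
    hence "rk (T ?S') \<le> rk (T S)" using Smax dS' by blast
    moreover have SS': "S \<subseteq> ?S'" by (rule setsum_left[OF sF])
    ultimately have "finite ((\<lambda>x. (+) x ` S) ` ?S')"
      using rk_lt[of ?S' S] dS' sS by (force simp: dcs_def)
    hence "S = ?S'" using dS' sS SS' unfolding dcs_def connected_def by blast
    moreover have "F \<subseteq> ?S'" by (rule setsum_right[OF sS(1)])
    ultimately show "z \<in> S" using F(2) by blast
  qed
  hence "?G \<subseteq> S" by (rule gen_least[OF sS(1)])
  hence "?G = S" using S by blast
  thus ?thesis using S by simp
qed

end


lemma sg_image: assumes "add_subgroup H" "\<And>x y. f (x + y) = f x + f y" shows "add_subgroup (f ` H)"
proof -
  have f0: "f 0 = 0" using assms(2)[of 0 0] by simp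
  have fd: "\<And>x y. f (x - y) = f x - f y" using assms(2) by (metis add_diff_cancel eq_diff_eq)
  show ?thesis unfolding add_subgroup_def
  proof (intro conjI ballI)
    show "0 \<in> f ` H" using f0 sg_0[OF assms(1)] by (metis imageI)
    fix x y assume "x \<in> f ` H" "y \<in> f ` H"
    then obtain a b where "a \<in> H" "b \<in> H" "x = f a" "y = f b" by auto
    thus "x - y \<in> f ` H" using fd sg_diff[OF assms(1)] by (metis imageI)
  qed
qed

context RLR begin

abbreviation g1 :: "'a set" where "g1 \<equiv> derived br 1"
abbreviation N :: "nat \<Rightarrow> 'a set" where "N k \<equiv> lcs br g1 k"

lemma g1_eq: "g1 = gen_subgroup (\<Union> ((\<lambda>a. br a ` UNIV) ` UNIV))"
proof -
  have "{br a b | a b. a \<in> (UNIV::'a set) \<and> b \<in> UNIV} = \<Union> ((\<lambda>a. br a ` UNIV) ` UNIV)" by auto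
  thus ?thesis by (simp add: br_set_def)
qed

lemma N_Suc_eq: "N (Suc k) = gen_subgroup (\<Union> ((\<lambda>a. br a ` g1) ` N k))"
proof -
  have "{br a b | a b. a \<in> N k \<and> b \<in> g1} = \<Union> ((\<lambda>a. br a ` g1) ` N k)" by auto
  thus ?thesis by (simp add: br_set_def)
qed

lemma br_in_g1: "br a b \<in> g1"
  using gen_sup[of "{br a b | a b. a \<in> (UNIV::'a set) \<and> b \<in> UNIV}"] by (auto simp: br_set_def)

lemma br_in_NSuc: "a \<in> N k \<Longrightarrow> b \<in> g1 \<Longrightarrow> br a b \<in> N (Suc k)"
  using gen_sup[of "{br a b | a b. a \<in> N k \<and> b \<in> g1}"] by (auto simp: br_set_def)

lemma N_ideal: "lie_ideal br (N k)"
proof (induction k)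
  case 0
  have "add_subgroup g1" by (simp add: br_set_def gen_sg)
  thus ?case using br_in_g1 by (simp add: lie_ideal_def)
next
  case (Suc k)
  have sg: "add_subgroup (N (Suc k))" by (simp add: br_set_def gen_sg)
  have "\<forall>x. \<forall>y\<in>N (Suc k). br x y \<in> N (Suc k)"
  proof (intro allI ballI)
    fix x y assume y: "y \<in> N (Suc k)"
    show "br x y \<in> N (Suc k)"
    proof (rule gen_hom[of "br x" _ "{br a b | a b. a \<in> N k \<and> b \<in> g1}"])
      show "\<And>u v. br x (u + v) = br x u + br x v" by (rule bil2)
      show "add_subgroup (N (Suc k))" by (rule sg)
      show "y \<in> gen_subgroup {br a b | a b. a \<in> N k \<and> b \<in> g1}" using y by (simp add: br_set_def)
      fix s assume "s \<in> {br a b | a b. a \<in> N k \<and> b \<in> g1}"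
      then obtain a b where ab: "a \<in> N k" "b \<in> g1" "s = br a b" by blast
      have "br x s = br a (br x b) + br (br x a) b" using ab jac2[of x a b] by simp
      moreover have "br a (br x b) \<in> N (Suc k)" using br_in_NSuc[OF ab(1) br_in_g1] .
      moreover have "br x a \<in> N k" using Suc.IH ab(1) by (simp add: lie_ideal_def)
      hence "br (br x a) b \<in> N (Suc k)" using br_in_NSuc ab(2) by blast
      ultimately show "br x s \<in> N (Suc k)" using sg_add[OF sg] by simp
    qed
  qed
  thus ?case using sg by (simp add: lie_ideal_def)
qed

lemma N_sg: "add_subgroup (N k)" using N_ideal by (simp add: lie_ideal_def)
lemma N_id: "y \<in> N k \<Longrightarrow> br x y \<in> N k" using N_ideal by (simp add: lie_ideal_def)

lemma N_dec: "N (Suc k) \<subseteq> N k"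
proof -
  have "{br a b | a b. a \<in> N k \<and> b \<in> g1} \<subseteq> N k"
  proof
    fix s assume "s \<in> {br a b | a b. a \<in> N k \<and> b \<in> g1}"
    then obtain a b where ab: "a \<in> N k" "s = br a b" by blast
    have "br b a \<in> N k" using N_id[OF ab(1)] .
    hence "- br b a \<in> N k" using sg_neg[OF N_sg] by blast
    thus "s \<in> N k" using ab anti[of a b] by simp
  qed
  thus ?thesis using gen_least[OF N_sg] by (simp add: br_set_def)
qed

lemma N_sub_g1: "N k \<subseteq> g1"
proof (induction k)
  case 0 thus ?case by simp
next
  case (Suc k) thus ?case using N_dec by blast
qed

lemma N_sq: "a \<in> N k \<Longrightarrow> b \<in> N k \<Longrightarrow> br a b \<in> N (Suc k)"
  using br_in_NSuc N_sub_g1 by blast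

lemma additive_br: "br a (x + y) = br a x + br a y" by (rule bil2)

lemma dcs_br_image: assumes "dcs H" shows "dcs (br a ` H)"
  by (rule conn_image[of H "br a", OF assms defmap_br bil2])

lemma dcs_g1: assumes cu: "connected D UNIV" shows "dcs g1"
proof -
  have "dcs UNIV" using cu by (simp add: dcs_def sg_UNIV def_UNIV)
  hence "\<And>F. F \<in> (\<lambda>a. br a ` UNIV) ` UNIV \<Longrightarrow> dcs F" using dcs_br_image by blast
  hence "dcs (gen_subgroup (\<Union> ((\<lambda>a. br a ` UNIV) ` UNIV)))" by (rule dcs_gen[OF cu])
  thus ?thesis using g1_eq by simp
qed

lemma dcs_N: assumes cu: "connected D UNIV" shows "dcs (N k)"
proof (induction k)
  case 0
  show ?case using dcs_g1[OF cu] by simp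
next
  case (Suc k)
  have "\<And>F. F \<in> (\<lambda>a. br a ` g1) ` N k \<Longrightarrow> dcs F" using dcs_br_image dcs_g1[OF cu] by blast
  hence "dcs (gen_subgroup (\<Union> ((\<lambda>a. br a ` g1) ` N k)))" by (rule dcs_gen[OF cu])
  thus ?case using N_Suc_eq by simp
qed

end


definition psi :: "('a::ab_group_add \<Rightarrow> 'a \<Rightarrow> 'a) \<Rightarrow> 'a \<Rightarrow> 'a \<Rightarrow> 'a" where
  "psi br l x = x + br l x"

definition Tr :: "('a::ab_group_add \<Rightarrow> 'a \<Rightarrow> 'a) \<Rightarrow> 'a set \<Rightarrow> 'a \<Rightarrow> 'a set \<Rightarrow> 'a set" where
  "Tr br B l H = setsum (psi br l ` H) B"

context RLR begin

lemma psi_add: "psi br l (x + y) = psi br l x + psi br l y"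
  by (simp add: psi_def bil2 algebra_simps)

lemma psi_eq: "psi br l = (\<lambda>x. x + br l x)" by (rule ext) (simp add: psi_def)

lemma defmap_psi: "defmap (psi br l)"
  unfolding psi_eq using defmap_plus[OF defmap_id defmap_br] .

context
  fixes L B :: "'a set"
  assumes LI: "lie_ideal br L" and BI: "lie_ideal br B"
    and LLB: "\<And>a b. a \<in> L \<Longrightarrow> b \<in> L \<Longrightarrow> br a b \<in> B" and dB: "dcs B"
begin

lemma Lsg: "add_subgroup L" using LI by (simp add: lie_ideal_def)
lemma Bsg: "add_subgroup B" using BI by (simp add: lie_ideal_def)
lemma Lid: "y \<in> L \<Longrightarrow> br x y \<in> L" using LI by (simp add: lie_ideal_def)
lemma Bid: "y \<in> B \<Longrightarrow> br x y \<in> B" using BI by (simp add: lie_ideal_def)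
lemma Lid2: "y \<in> L \<Longrightarrow> br y x \<in> L"
  using Lid[of y x] sg_neg[OF Lsg, of "br x y"] anti[of y x] by simp
lemma Bid2: "y \<in> B \<Longrightarrow> br y x \<in> B"
  using Bid[of y x] sg_neg[OF Bsg, of "br x y"] anti[of y x] by simp

lemma Tr_sub: "B \<subseteq> Tr br B l H" if "add_subgroup H"
  unfolding Tr_def using setsum_right[OF sg_image[OF that psi_add]] .

lemma Tr_mono: "H \<subseteq> H' \<Longrightarrow> Tr br B l H \<subseteq> Tr br B l H'"
  unfolding Tr_def setsum_def by blast

lemma Tr_dcsr: assumes H: "def_conn_subring br D H" and l: "l \<in> L"
  shows "def_conn_subring br D (Tr br B l H)"
proof -
  have sH: "add_subgroup H" "\<forall>x\<in>H. \<forall>y\<in>H. br x y \<in> H" "definable D H" "connected D H"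
    using H by (auto simp: def_conn_subring_def lie_subring_def)
  have dH: "dcs H" using sH by (simp add: dcs_def)
  have dI: "dcs (psi br l ` H)" by (rule conn_image[OF dH defmap_psi psi_add])
  have dT: "dcs (Tr br B l H)" unfolding Tr_def by (rule conn_sum[OF dI dB])
  have cl: "\<forall>u\<in>Tr br B l H. \<forall>v\<in>Tr br B l H. br u v \<in> Tr br B l H"
  proof (intro ballI)
    fix u v assume "u \<in> Tr br B l H" "v \<in> Tr br B l H"
    then obtain h b h' b' where hb: "h \<in> H" "b \<in> B" "h' \<in> H" "b' \<in> B"
      "u = h + br l h + b" "v = h' + br l h' + b'"
      unfolding Tr_def setsum_def psi_def by blast
    have eq: "br u v = (br h h' + br l (br h h')) +
       (br (br l h) (br l h') + br h b' + br (br l h) b' + br b h' + br b (br l h') + br b b')"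
      unfolding hb(5,6) by (simp add: bil1 bil2 jac2[of l h h'] algebra_simps)
    have r1: "br h h' + br l (br h h') \<in> psi br l ` H"
      using sH(2) hb(1,3) unfolding psi_def by blast
    have lh: "br l h \<in> L" "br l h' \<in> L" using Lid2[OF l] by auto
    have r2: "br (br l h) (br l h') + br h b' + br (br l h) b' + br b h' + br b (br l h') + br b b' \<in> B"
      using LLB[OF lh] Bid[OF hb(4)] Bid2[OF hb(2)] sg_add[OF Bsg] by simp
    show "br u v \<in> Tr br B l H" unfolding eq Tr_def setsum_def using r1 r2 by blast
  qed
  show ?thesis using dT cl by (simp add: def_conn_subring_def lie_subring_def dcs_def)
qed

lemma Tr_inv: assumes l: "l \<in> L" and H: "add_subgroup H" and BH: "B \<subseteq> H"
  shows "Tr br B (- l) (Tr br B l H) = H"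
proof
  show "Tr br B (- l) (Tr br B l H) \<subseteq> H"
  proof
    fix z assume "z \<in> Tr br B (- l) (Tr br B l H)"
    then obtain h b b2 where hb: "h \<in> H" "b \<in> B" "b2 \<in> B"
      "z = psi br (- l) (psi br l h + b) + b2"
      unfolding Tr_def setsum_def by blast
    have eq: "z = h + (- br l (br l h) + (b - br l b) + b2)"
      unfolding hb(4) psi_def by (simp add: bil1 bil2 brnegl algebra_simps)
    have "br l h \<in> L" using Lid2[OF l] by simp
    hence "br l (br l h) \<in> B" using LLB l by blast
    hence "- br l (br l h) + (b - br l b) + b2 \<in> B"
      using hb(2,3) Bid[OF hb(2)] sg_add[OF Bsg] sg_neg[OF Bsg] sg_diff[OF Bsg] by simp
    thus "z \<in> H" unfolding eq using hb(1) BH sg_add[OF H] by blast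
  qed
  show "H \<subseteq> Tr br B (- l) (Tr br B l H)"
  proof
    fix h assume h: "h \<in> H"
    have "psi br l h + 0 \<in> Tr br B l H"
      unfolding Tr_def setsum_def using h sg_0[OF Bsg] by blast
    moreover have "br l h \<in> L" using Lid2[OF l] by simp
    hence "br l (br l h) \<in> B" using LLB l by blast
    moreover have "h = psi br (- l) (psi br l h + 0) + br l (br l h)"
      unfolding psi_def by (simp add: bil1 bil2 brnegl algebra_simps)
    ultimately show "h \<in> Tr br B (- l) (Tr br B l H)" unfolding Tr_def setsum_def by blast
  qed
qed

lemma Tr_inv': assumes l: "l \<in> L" and H: "add_subgroup H" and BH: "B \<subseteq> H"
  shows "Tr br B l (Tr br B (- l) H) = H"
  using Tr_inv[OF sg_neg[OF Lsg l] H BH] by simp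

lemma Tr_UNIV: assumes l: "l \<in> L" shows "Tr br B l UNIV = UNIV"
proof -
  have "UNIV = Tr br B l (Tr br B (- l) UNIV)" using Tr_inv'[OF l sg_UNIV] by simp
  also have "\<dots> \<subseteq> Tr br B l UNIV" by (rule Tr_mono) simp
  finally show ?thesis by blast
qed

lemma Tr_UNIV': assumes l: "l \<in> L" shows "Tr br B (- l) UNIV = UNIV"
  using Tr_UNIV[OF sg_neg[OF Lsg l]] .

lemma Tr_max: assumes M: "maximal_def_conn_subring br D M" and BM: "B \<subseteq> M" and l: "l \<in> L"
  shows "maximal_def_conn_subring br D (Tr br B l M)"
proof -
  have dM: "def_conn_subring br D M" "M \<noteq> UNIV"
    and mx: "\<And>K. def_conn_subring br D K \<Longrightarrow> K \<noteq> UNIV \<Longrightarrow> M \<subseteq> K \<Longrightarrow> K = M"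
    using M unfolding maximal_def_conn_subring_def by blast+
  have sM: "add_subgroup M" using dM by (simp add: def_conn_subring_def lie_subring_def)
  have l': "- l \<in> L" by (rule sg_neg[OF Lsg l])
  have A: "def_conn_subring br D (Tr br B l M)" by (rule Tr_dcsr[OF dM(1) l])
  have inv: "Tr br B (- l) (Tr br B l M) = M" by (rule Tr_inv[OF l sM BM])
  have B: "Tr br B l M \<noteq> UNIV"
  proof
    assume "Tr br B l M = UNIV"
    hence "M = Tr br B (- l) UNIV" using inv by simp
    thus False using dM(2) Tr_UNIV'[OF l] by simp
  qed
  have C: "\<forall>K. def_conn_subring br D K \<longrightarrow> K \<noteq> UNIV \<longrightarrow> Tr br B l M \<subseteq> K \<longrightarrow> K = Tr br B l M"
  proof (intro allI impI)
    fix K assume K: "def_conn_subring br D K" "K \<noteq> UNIV" "Tr br B l M \<subseteq> K"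
    have sK: "add_subgroup K" using K(1) by (simp add: def_conn_subring_def lie_subring_def)
    have BK: "B \<subseteq> K" using Tr_sub[OF sM] K(3) by blast
    have K1: "def_conn_subring br D (Tr br B (- l) K)" by (rule Tr_dcsr[OF K(1) l'])
    have K2: "M \<subseteq> Tr br B (- l) K" using Tr_mono[OF K(3), of "- l"] inv by simp
    have Kinv: "Tr br B l (Tr br B (- l) K) = K" by (rule Tr_inv'[OF l sK BK])
    have K3: "Tr br B (- l) K \<noteq> UNIV"
    proof
      assume "Tr br B (- l) K = UNIV"
      hence "K = Tr br B l UNIV" using Kinv by simp
      thus False using K(2) Tr_UNIV[OF l] by simp
    qed
    have "Tr br B (- l) K = M" by (rule mx[OF K1 K3 K2])
    thus "K = Tr br B l M" using Kinv by simp
  qed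
  show ?thesis using A B C unfolding maximal_def_conn_subring_def by blast
qed

end
end


context RLR begin

lemma main_mem: assumes cu: "connected D UNIV" and nil: "nilpotent_subring br g1"
  and M: "maximal_def_conn_subring br D M" and y: "y \<in> frattini br D"
  shows "br x y \<in> M"
proof -
  have yM: "y \<in> M" using y M by (simp add: frattini_def)
  have dM: "def_conn_subring br D M"
    and mx: "\<And>K. def_conn_subring br D K \<Longrightarrow> K \<noteq> UNIV \<Longrightarrow> M \<subseteq> K \<Longrightarrow> K = M"
    using M unfolding maximal_def_conn_subring_def by blast+
  have sM: "add_subgroup M" "\<forall>x\<in>M. \<forall>y\<in>M. br x y \<in> M" "definable D M" "connected D M"
    using dM by (auto simp: def_conn_subring_def lie_subring_def)
  have dcsM: "dcs M" using sM by (simp add: dcs_def)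
  obtain k where k: "N k = {0}" using nil by (auto simp: nilpotent_subring_def)
  let ?P = "\<lambda>j. N j \<subseteq> M"
  have Pk: "?P k" using k sg_0[OF sM(1)] by simp
  define j where "j = (LEAST j. ?P j)"
  have Pj: "?P j" unfolding j_def by (rule LeastI[of ?P k, OF Pk])
  show ?thesis
  proof (cases j)
    case 0
    thus ?thesis using Pj br_in_g1[of x y] by auto
  next
    case (Suc i)
    have nPi: "\<not> ?P i" using not_less_Least[of i ?P] Suc unfolding j_def by simp
    let ?L = "N i" and ?B = "N (Suc i)"
    have BM: "?B \<subseteq> M" using Pj Suc by simp
    have Lid2: "\<And>a z. a \<in> ?L \<Longrightarrow> br a z \<in> ?L"
      using N_id sg_neg[OF N_sg] anti by metis
    have dcsK: "dcs (setsum M ?L)" by (rule conn_sum[OF dcsM dcs_N[OF cu]])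
    have clK: "\<forall>u\<in>setsum M ?L. \<forall>v\<in>setsum M ?L. br u v \<in> setsum M ?L"
    proof (intro ballI)
      fix u v assume "u \<in> setsum M ?L" "v \<in> setsum M ?L"
      then obtain m a m' a' where ma: "m \<in> M" "a \<in> ?L" "m' \<in> M" "a' \<in> ?L" "u = m + a" "v = m' + a'"
        unfolding setsum_def by blast
      have eq: "br u v = (br m m' + br a a') + (br m a' + br a m')"
        unfolding ma(5,6) by (simp add: bil1 bil2 algebra_simps)
      have "br m m' \<in> M" using sM(2) ma by blast
      moreover have "br a a' \<in> M" using N_sq[OF ma(2) ma(4)] BM by blast
      ultimately have r1: "br m m' + br a a' \<in> M" using sg_add[OF sM(1)] by blast
      have "br m a' \<in> ?L" using N_id[OF ma(4)] .
      moreover have "br a m' \<in> ?L" using Lid2[OF ma(2)] .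
      ultimately have r2: "br m a' + br a m' \<in> ?L" using sg_add[OF N_sg] by blast
      show "br u v \<in> setsum M ?L" unfolding eq setsum_def using r1 r2 by blast
    qed
    have dcsrK: "def_conn_subring br D (setsum M ?L)"
      using dcsK clK by (simp add: dcs_def def_conn_subring_def lie_subring_def)
    have KU: "setsum M ?L = UNIV"
    proof (rule ccontr)
      assume "setsum M ?L \<noteq> UNIV"
      hence "setsum M ?L = M" using mx[OF dcsrK] setsum_left[OF N_sg] by blast
      moreover have "?L \<subseteq> setsum M ?L" by (rule setsum_right[OF sM(1)])
      ultimately show False using nPi by simp
    qed
    obtain m a where x: "m \<in> M" "a \<in> ?L" "x = m + a" using KU unfolding setsum_def by blast
    have M2: "maximal_def_conn_subring br D (Tr br ?B a M)"
      by (rule Tr_max[where L = ?L and B = ?B, OF N_ideal N_ideal N_sq dcs_N[OF cu] M BM x(2)])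
    hence "y \<in> Tr br ?B a M" using y by (simp add: frattini_def)
    then obtain m0 b where mb: "m0 \<in> M" "b \<in> ?B" "y = m0 + br a m0 + b"
      unfolding Tr_def setsum_def psi_def by blast
    have "br a m0 = y - m0 - b" using mb(3) by (simp add: algebra_simps)
    moreover have "b \<in> M" using mb(2) BM by blast
    ultimately have am0: "br a m0 \<in> M" using sg_diff[OF sM(1)] yM mb(1) by metis
    have "br a y = br a m0 + (br a (br a m0) + br a b)" unfolding mb(3) by (simp add: bil2 algebra_simps)
    moreover have "br a (br a m0) \<in> M" using N_sq[OF x(2) Lid2[OF x(2)]] BM by blast
    moreover have "br a b \<in> M" using N_id[OF mb(2)] BM by blast
    ultimately have ay: "br a y \<in> M" using am0 sg_add[OF sM(1)] by simp
    have "br m y \<in> M" using sM(2) x(1) yM by blast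
    moreover have "br x y = br m y + br a y" unfolding x(3) by (rule bil1)
    ultimately show ?thesis using ay sg_add[OF sM(1)] by simp
  qed
qed

end

theorem mainTheorem11:
  fixes br :: "'a::ab_group_add \<Rightarrow> 'a \<Rightarrow> 'a"
    and D :: "'a list set set" and rk :: "'a list set \<Rightarrow> nat"
  assumes "ranked_lie_ring br D rk"
    and "connected D UNIV"
    and "soluble br"
    and "nilpotent_subring br (derived br 1)"
  shows "lie_ideal br (frattini br D)"
proof -
  interpret R: RLR br D rk by (rule RLR.intro[OF assms(1)])
  have sg: "add_subgroup (frattini br D)"
    unfolding add_subgroup_def frattini_def
  proof (intro conjI ballI)
    show "0 \<in> \<Inter>{H. maximal_def_conn_subring br D H}"
      by (auto simp: maximal_def_conn_subring_def def_conn_subring_def lie_subring_def intro: sg_0)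
    fix x y assume "x \<in> \<Inter>{H. maximal_def_conn_subring br D H}" "y \<in> \<Inter>{H. maximal_def_conn_subring br D H}"
    thus "x - y \<in> \<Inter>{H. maximal_def_conn_subring br D H}"
      by (auto simp: maximal_def_conn_subring_def def_conn_subring_def lie_subring_def intro: sg_diff)
  qed
  have "\<forall>x. \<forall>y\<in>frattini br D. br x y \<in> frattini br D"
  proof (intro allI ballI)
    fix x y assume y: "y \<in> frattini br D"
    have "\<And>M. maximal_def_conn_subring br D M \<Longrightarrow> br x y \<in> M"
      using R.main_mem[OF assms(2) assms(4) _ y] by blast
    thus "br x y \<in> frattini br D" by (simp add: frattini_def)
  qed
  thus ?thesis using sg by (simp add: lie_ideal_def)
qed


end
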